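(* Let $A$ be a pca and $f,g:A\rightharpoonup A$ partial functions. Then the pcas $A[f][g]$ and $A[g][f]$ are isomorphic.
   Context: A partial combinatory algebra (pca) is a set $A$ with a partial binary application (associating to the left) admitting $K,S\in A$ with $Kab=a$, $Sab{\downarrow}$, $Sabc\simeq ac(bc)$. Each pca has fixed Booleans $\top,\bot$, pairing $p$ with projections $p_0,p_1$ ($p_0(pab)=a$, $p_1(pab)=b$), and a coding $[u_0,\dots,u_{n-1}]$ of finite sequences with concatenation $\ast$. For a pca $A$ and partial $f:A\rightharpoonup A$, the pca $A[f]$ has underlying set $A$; for $a,b\in A$, an $f$-dialogue between $a$ and $b$ is a code $u=[u_0,\dots,u_{n-1}]$ such that for every $i<n$ there is $v_i$ with $a\cdot([b]\ast[u_0,\dots,u_{i-1}])=p\bot v_i$ and $f(v_i)$ defined and equal to $u_i$; then $a\cdot^f b=c$ iff there is an $f$-dialogue $u$ between $a$ and $b$ with $a\cdot([b]\ast u)=p\top c$. Since $A[f]$ has underlying set $A$, $g$ is also a partial endofunction of $A[f]$, so $A[f][g]$ makes sense. An applicative morphism $\gamma:A\to B$ is a function from $A$ to nonempty subsets of $B$ with some $r\in B$ such that $aa'{\downarrow}$, $b\in\gamma(a)$, $b'\in\gamma(a')$ imply $rbb'{\downarrow}$ and $rbb'\in\gamma(aa')$; composition is $(\delta\gamma)(a)=\bigcup_{b\in\gamma(a)}\delta(b)$, identities are $a\mapsto\{a\}$. Pcas $A,B$ are isomorphic if there are applicative morphisms $\gamma:A\to B$, $\delta:B\to A$ with $\delta\gamma$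 and $\gamma\delta$ equal to the identity morphisms. *)

theory Defs
  imports Main
begin

type_synonym 'a pas = "'a \<Rightarrow> 'a \<Rightarrow> 'a option"

definition aap :: "'a pas \<Rightarrow> 'a option \<Rightarrow> 'a option \<Rightarrow> 'a option" where
  "aap m x y = (case x of None \<Rightarrow> None | Some a \<Rightarrow> (case y of None \<Rightarrow> None | Some b \<Rightarrow> m a b))"

definition pca :: "'a pas \<Rightarrow> bool" where
  "pca m \<longleftrightarrow> (\<exists>k s. \<forall>a b.
      aap m (m k a) (Some b) = Some a \<and>
      aap m (m s a) (Some b) \<noteq> None \<and>
      (\<forall>c. aap m (aap m (m s a) (Some b)) (Some c) = aap m (m a c) (m b c)))"

text \<open>The fixed auxiliary data of a pca: Booleans, pairing with projections,
  and a coding of finite sequences (lists) that is computable in the pca.\<close>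
record 'a pca_data =
  tt :: 'a
  ff :: 'a
  pr :: 'a
  pr0 :: 'a
  pr1 :: 'a
  code :: "'a list \<Rightarrow> 'a"

definition valid_data :: "'a pas \<Rightarrow> 'a pca_data \<Rightarrow> bool" where
  "valid_data m d \<longleftrightarrow>
     (\<forall>a b. aap m (m (tt d) a) (Some b) = Some a) \<and>
     (\<forall>a b. aap m (m (ff d) a) (Some b) = Some b) \<and>
     (\<forall>a b. \<exists>c. aap m (m (pr d) a) (Some b) = Some c \<and>
                 m (pr0 d) c = Some a \<and> m (pr1 d) c = Some b) \<and>
     inj (code d) \<and>
     (\<exists>cons hd tl isnil.
        (\<forall>a us. aap m (m cons a) (Some (code d us)) = Some (code d (a # us))) \<and>
        (\<forall>a us. m hd (code d (a # us)) = Some a) \<and>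
        (\<forall>a us. m tl (code d (a # us)) = Some (code d us)) \<and>
        m isnil (code d []) = Some (tt d) \<and>
        (\<forall>a us. m isnil (code d (a # us)) = Some (ff d)))"

definition pdata :: "'a pas \<Rightarrow> 'a pca_data" where
  "pdata m = (SOME d. valid_data m d)"

text \<open>f-dialogue between a and b (w.r.t. data d): the list us, coded as code d us.
  Note [b] * [u_0,...,u_{i-1}] = code d (b # take i us).\<close>
definition dialogue :: "'a pas \<Rightarrow> 'a pca_data \<Rightarrow> ('a \<Rightarrow> 'a option) \<Rightarrow> 'a \<Rightarrow> 'a \<Rightarrow> 'a list \<Rightarrow> bool" where
  "dialogue m d f a b us \<longleftrightarrow>
     (\<forall>i < length us. \<exists>v. m a (code d (b # take i us)) = aap m (m (pr d) (ff d)) (Some v)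
                          \<and> f v = Some (us ! i))"

definition rel_app_res :: "'a pas \<Rightarrow> 'a pca_data \<Rightarrow> ('a \<Rightarrow> 'a option) \<Rightarrow> 'a \<Rightarrow> 'a \<Rightarrow> 'a \<Rightarrow> bool" where
  "rel_app_res m d f a b c \<longleftrightarrow>
     (\<exists>us. dialogue m d f a b us \<and> m a (code d (b # us)) = aap m (m (pr d) (tt d)) (Some c))"

definition rel_app :: "'a pas \<Rightarrow> 'a pca_data \<Rightarrow> ('a \<Rightarrow> 'a option) \<Rightarrow> 'a pas" where
  "rel_app m d f a b = (if \<exists>c. rel_app_res m d f a b c then Some (THE c. rel_app_res m d f a b c) else None)"

definition extend :: "'a pas \<Rightarrow> ('a \<Rightarrow> 'a option) \<Rightarrow> 'a pas" where
  "extend m f = rel_app m (pdata m) f"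

definition app_morph :: "'a pas \<Rightarrow> 'b pas \<Rightarrow> ('a \<Rightarrow> 'b set) \<Rightarrow> bool" where
  "app_morph m1 m2 \<gamma> \<longleftrightarrow> (\<forall>a. \<gamma> a \<noteq> {}) \<and>
     (\<exists>r. \<forall>a a' b b' c. m1 a a' = Some c \<longrightarrow> b \<in> \<gamma> a \<longrightarrow> b' \<in> \<gamma> a' \<longrightarrow>
          (\<exists>e. aap m2 (m2 r b) (Some b') = Some e \<and> e \<in> \<gamma> c))"

definition morph_comp :: "('b \<Rightarrow> 'c set) \<Rightarrow> ('a \<Rightarrow> 'b set) \<Rightarrow> ('a \<Rightarrow> 'c set)" where
  "morph_comp \<delta> \<gamma> a = (\<Union>b\<in>\<gamma> a. \<delta> b)"

definition pca_iso :: "'a pas \<Rightarrow> 'b pas \<Rightarrow> bool" where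
  "pca_iso m1 m2 \<longleftrightarrow> (\<exists>\<gamma> \<delta>. app_morph m1 m2 \<gamma> \<and> app_morph m2 m1 \<delta> \<and>
     morph_comp \<delta> \<gamma> = (\<lambda>a. {a}) \<and> morph_comp \<gamma> \<delta> = (\<lambda>b. {b}))"

end

theory Submission
  imports Defs
begin

lemma aap_simps'[simp]: "aap m None y = None" "aap m x None = None" "aap m (Some a) (Some b) = m a b"
  by (auto simp: aap_def split: option.splits)

lemma vd_pr: "valid_data X dd \<Longrightarrow> \<exists>c. aap X (X (pr dd) a) (Some b) = Some c \<and> X (pr0 dd) c = Some a \<and> X (pr1 dd) c = Some b"
  unfolding valid_data_def by blast

lemma pr_inj_gen:
  assumes v: "valid_data X dd" and e: "aap X (X (pr dd) a) (Some b) = aap X (X (pr dd) a') (Some b')"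
  shows "a = a' \<and> b = b'"
proof -
  obtain c where c: "aap X (X (pr dd) a) (Some b) = Some c" "X (pr0 dd) c = Some a" "X (pr1 dd) c = Some b"
    using vd_pr[OF v] by blast
  obtain c' where c': "aap X (X (pr dd) a') (Some b') = Some c'" "X (pr0 dd) c' = Some a'" "X (pr1 dd) c' = Some b'"
    using vd_pr[OF v] by blast
  have "c = c'" using c(1) c'(1) e by simp
  then show ?thesis using c c' by simp
qed

lemma vd_nontriv:
  fixes X :: "'a pas"
  assumes v: "valid_data X dd" and ne: "(x::'a) \<noteq> y"
  shows "tt dd \<noteq> ff dd"
proof
  assume e: "tt dd = ff dd"
  have "aap X (X (tt dd) x) (Some y) = Some x" using v unfolding valid_data_def by blast
  moreover have "aap X (X (ff dd) x) (Some y) = Some y" using v unfolding valid_data_def by blast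
  ultimately show False using e ne by simp
qed

lemma rel_app_unique:
  assumes v: "valid_data X dd" and nt: "tt dd \<noteq> ff dd"
    and r1: "rel_app_res X dd Or a b c" and r2: "rel_app_res X dd Or a b c'"
  shows "c = c'"
proof -
  obtain us where D: "dialogue X dd Or a b us" and F: "X a (code dd (b#us)) = aap X (X (pr dd) (tt dd)) (Some c)"
    using r1 unfolding rel_app_res_def by blast
  obtain us' where D': "dialogue X dd Or a b us'" and F': "X a (code dd (b#us')) = aap X (X (pr dd) (tt dd)) (Some c')"
    using r2 unfolding rel_app_res_def by blast
  have pre: "i \<le> length us \<longrightarrow> i \<le> length us' \<longrightarrow> take i us = take i us'" for i
  proof (induction i)
    case 0 then show ?case by simp
  next
    case (Suc i)
    show ?case
    proof (intro impI)
      assume l: "Suc i \<le> length us" "Suc i \<le> length us'"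
      then have t: "take i us = take i us'" using Suc by simp
      obtain v where v1: "X a (code dd (b # take i us)) = aap X (X (pr dd) (ff dd)) (Some v)" "Or v = Some (us ! i)"
        using D l unfolding dialogue_def by (meson Suc_le_lessD)
      obtain v' where v2: "X a (code dd (b # take i us')) = aap X (X (pr dd) (ff dd)) (Some v')" "Or v' = Some (us' ! i)"
        using D' l unfolding dialogue_def by (meson Suc_le_lessD)
      have "v = v'" using pr_inj_gen[OF v] v1(1) v2(1) t by metis
      then have "us ! i = us' ! i" using v1(2) v2(2) by simp
      then show "take (Suc i) us = take (Suc i) us'"
        using t l by (simp add: take_Suc_conv_app_nth)
    qed
  qed
  have nl: False if a1: "length us < length us'"
    and D': "dialogue X dd Or a b us'"
    and F: "X a (code dd (b#us)) = aap X (X (pr dd) (tt dd)) (Some c)"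
    and pre: "take (length us) us = take (length us) us'" for us us' c
  proof -
    obtain v where v1: "X a (code dd (b # take (length us) us')) = aap X (X (pr dd) (ff dd)) (Some v)"
      using D' a1 unfolding dialogue_def by blast
    then have "aap X (X (pr dd) (tt dd)) (Some c) = aap X (X (pr dd) (ff dd)) (Some v)"
      using F pre by simp
    then show False using pr_inj_gen[OF v] nt by blast
  qed
  have "length us = length us'"
  proof (rule ccontr)
    assume "length us \<noteq> length us'"
    then consider "length us < length us'" | "length us' < length us" by linarith
    then show False
    proof cases
      case 1 then show False using nl[OF 1 D' F] pre[of "length us"] by simp
    next
      case 2 then show False using nl[OF 2 D F'] pre[of "length us'"] by simp
    qed
  qed
  then have "us = us'" using pre[of "length us"] by simp
  then show "c = c'" using F F' pr_inj_gen[OF v] by metis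
qed

lemma rel_app_iff:
  assumes v: "valid_data X dd" and nt: "tt dd \<noteq> ff dd"
  shows "rel_app X dd Or a b = Some c \<longleftrightarrow> rel_app_res X dd Or a b c"
proof
  assume "rel_app X dd Or a b = Some c"
  then have ex: "\<exists>c. rel_app_res X dd Or a b c" and th: "(THE c. rel_app_res X dd Or a b c) = c"
    unfolding rel_app_def by (auto split: if_splits)
  then obtain c0 where c0: "rel_app_res X dd Or a b c0" by blast
  have "rel_app_res X dd Or a b (THE c. rel_app_res X dd Or a b c)"
    using theI[of "rel_app_res X dd Or a b" c0] c0 rel_app_unique[OF v nt] by blast
  then show "rel_app_res X dd Or a b c" using th by simp
next
  assume r: "rel_app_res X dd Or a b c"
  then have "(THE c. rel_app_res X dd Or a b c) = c"
    using rel_app_unique[OF v nt] by blast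
  then show "rel_app X dd Or a b = Some c" using r unfolding rel_app_def by auto
qed

definition gpr :: "'a pas \<Rightarrow> 'a pca_data \<Rightarrow> 'a \<Rightarrow> 'a \<Rightarrow> 'a" where
  "gpr X dd a b = the (aap X (X (pr dd) a) (Some b))"

lemma gpr_all:
  assumes v: "valid_data X dd"
  shows "aap X (X (pr dd) a) (Some b) = Some (gpr X dd a b) \<and> X (pr0 dd) (gpr X dd a b) = Some a \<and> X (pr1 dd) (gpr X dd a b) = Some b"
proof -
  obtain c where c: "aap X (X (pr dd) a) (Some b) = Some c" "X (pr0 dd) c = Some a" "X (pr1 dd) c = Some b"
    using vd_pr[OF v] by blast
  then have "gpr X dd a b = c" unfolding gpr_def by simp
  then show ?thesis using c by simp
qed

lemma gpr_inj:
  assumes v: "valid_data X dd"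
  shows "gpr X dd a b = gpr X dd a' b' \<longleftrightarrow> a = a' \<and> b = b'"
  using gpr_all[OF v, of a b] gpr_all[OF v, of a' b'] by (metis option.inject)

lemma vd_tt:
  assumes v: "valid_data X dd"
  shows "\<exists>z. X (tt dd) a = Some z \<and> (\<forall>b. X z b = Some a)"
proof -
  have h: "\<forall>b. aap X (X (tt dd) a) (Some b) = Some a" using v unfolding valid_data_def by blast
  then obtain z where "X (tt dd) a = Some z" by (cases "X (tt dd) a") auto
  then show ?thesis using h by auto
qed

lemma vd_ff:
  assumes v: "valid_data X dd"
  shows "\<exists>z. X (ff dd) a = Some z \<and> (\<forall>b. X z b = Some b)"
proof -
  have h: "\<forall>b. aap X (X (ff dd) a) (Some b) = Some b" using v unfolding valid_data_def by blast
  then obtain z where "X (ff dd) a = Some z" by (cases "X (ff dd) a") auto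
  then show ?thesis using h by auto
qed

lemma vd_pr1:
  assumes v: "valid_data X dd"
  shows "\<exists>t1. X (pr dd) a = Some t1 \<and> (\<forall>b. X t1 b = Some (gpr X dd a b))"
proof -
  have h: "\<forall>b. aap X (X (pr dd) a) (Some b) = Some (gpr X dd a b)" using gpr_all[OF v] by blast
  then obtain z where "X (pr dd) a = Some z" by (cases "X (pr dd) a") auto
  then show ?thesis using h by auto
qed

datatype 'a ct = V nat | C 'a | Ap "'a ct" "'a ct" (infixl "\<bullet>" 95)


locale pcal =
  fixes m :: "'a pas" and K S :: 'a
  assumes Kax: "aap m (m K a) (Some b) = Some a"
    and Sdef: "aap m (m S a) (Some b) \<noteq> None"
    and Sax: "aap m (aap m (m S a) (Some b)) (Some c) = aap m (m a c) (m b c)"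
begin

fun ev :: "(nat \<Rightarrow> 'a) \<Rightarrow> 'a ct \<Rightarrow> 'a option" where
  "ev e (V n) = Some (e n)" | "ev e (C c) = Some c" | "ev e (Ap s t) = aap m (ev e s) (ev e t)"

fun lam :: "nat \<Rightarrow> 'a ct \<Rightarrow> 'a ct" where
  "lam n (V k) = (if k = n then C S \<bullet> C K \<bullet> C K else C K \<bullet> V k)"
| "lam n (C c) = C K \<bullet> C c"
| "lam n (Ap s t) = C S \<bullet> lam n s \<bullet> lam n t"

lemma K1: "\<exists>k. m K a = Some k"
  using Kax[of a a] by (cases "m K a") auto

lemma S1: "\<exists>k. m S a = Some k"
  using Sdef[of a a] by (cases "m S a") auto

lemma S2: "\<exists>k. aap m (m S a) (Some b) = Some k"
  using Sdef[of a b] by auto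

lemma ev_lam_def: "\<exists>f. ev e (lam n t) = Some f"
proof (induction t)
  case (V k)
  then show ?case using S2[of K K] K1[of "e k"] by auto
next
  case (C c)
  then show ?case using K1[of c] by auto
next
  case (Ap s t)
  then obtain f1 f2 where "ev e (lam n s) = Some f1" "ev e (lam n t) = Some f2" by auto
  then show ?case using S2[of f1 f2] by auto
qed

lemma ev_lam_app: "ev e (lam n t) = Some f \<Longrightarrow> m f a = ev (e(n:=a)) t"
proof (induction t arbitrary: f)
  case (V k)
  show ?case
  proof (cases "k = n")
    case True
    obtain ka where ka: "m K a = Some ka" using K1 by blast
    have "m f a = aap m (aap m (m S K) (Some K)) (Some a)" using V True by simp
    also have "\<dots> = aap m (m K a) (m K a)" by (rule Sax)
    also have "\<dots> = Some a" using ka Kax[of a ka] by simp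
    finally show ?thesis using True by simp
  next
    case False
    then have "m K (e k) = Some f" using V by simp
    then have "m f a = aap m (m K (e k)) (Some a)" by simp
    then show ?thesis using False Kax by simp
  qed
next
  case (C c)
  then have "m K c = Some f" by simp
  then have "m f a = aap m (m K c) (Some a)" by simp
  then show ?case using Kax by simp
next
  case (Ap s t)
  obtain f1 f2 where f1: "ev e (lam n s) = Some f1" and f2: "ev e (lam n t) = Some f2"
    using ev_lam_def by blast
  have "m f a = aap m (aap m (m S f1) (Some f2)) (Some a)" using Ap.prems f1 f2 by simp
  also have "\<dots> = aap m (m f1 a) (m f2 a)" by (rule Sax)
  finally show ?case using Ap.IH f1 f2 by simp
qed

definition lv :: "(nat \<Rightarrow> 'a) \<Rightarrow> nat \<Rightarrow> 'a ct \<Rightarrow> 'a" where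
  "lv e n t = the (ev e (lam n t))"

lemma ev_lam[simp]: "ev e (lam n t) = Some (lv e n t)"
  using ev_lam_def[of e n t] by (auto simp: lv_def)

lemma lv_app[simp]: "m (lv e n t) a = ev (e(n:=a)) t"
  using ev_lam_app ev_lam by blast

declare lam.simps[simp del]

definition env0 :: "nat \<Rightarrow> 'a" where "env0 = (\<lambda>_. K)"

definition Xv :: 'a where
  "Xv = lv env0 0 (lam 1 (lam 2 (V 1 \<bullet> (V 0 \<bullet> V 0 \<bullet> V 1) \<bullet> V 2)))"

definition zfix :: "'a \<Rightarrow> 'a" where
  "zfix F = lv (env0(0:=Xv, 1:=F)) 2 (V 1 \<bullet> (V 0 \<bullet> V 0 \<bullet> V 1) \<bullet> V 2)"

lemma zfix_app: "m (zfix F) a = aap m (m F (zfix F)) (Some a)"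
proof -
  have "m Xv Xv = Some (lv (env0(0:=Xv)) 1 (lam 2 (V 1 \<bullet> (V 0 \<bullet> V 0 \<bullet> V 1) \<bullet> V 2)))"
    by (simp add: Xv_def)
  then have "aap m (m Xv Xv) (Some F) = Some (zfix F)"
    by (simp add: zfix_def)
  then show ?thesis by (simp add: zfix_def)
qed

end

locale pcad = pcal m K S for m :: "'a pas" and K S +
  fixes d :: "'a pca_data" and cons hd tl isnil :: 'a
  assumes valid: "valid_data m d"
  and consax[simp]: "aap m (m cons a) (Some (code d us)) = Some (code d (a # us))"
  and hdax[simp]: "m hd (code d (a # us)) = Some a"
  and tlax[simp]: "m tl (code d (a # us)) = Some (code d us)"
  and isnil0[simp]: "m isnil (code d []) = Some (tt d)"
  and isnil1[simp]: "m isnil (code d (a # us)) = Some (ff d)"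
  and nontriv[simp]: "tt d \<noteq> ff d"
begin

lemma nontriv'[simp]: "ff d \<noteq> tt d" using nontriv by (rule not_sym)

lemma ttax[simp]: "aap m (m (tt d) a) (Some b) = Some a"
  using valid unfolding valid_data_def by blast
lemma ffax[simp]: "aap m (m (ff d) a) (Some b) = Some b"
  using valid unfolding valid_data_def by blast

definition prv :: "'a \<Rightarrow> 'a \<Rightarrow> 'a" where
  "prv a b = the (aap m (m (pr d) a) (Some b))"

lemma pr_ex: "\<exists>c. aap m (m (pr d) a) (Some b) = Some c \<and> m (pr0 d) c = Some a \<and> m (pr1 d) c = Some b"
  using valid unfolding valid_data_def by blast

lemma pr_all: "aap m (m (pr d) a) (Some b) = Some (prv a b) \<and> m (pr0 d) (prv a b) = Some a \<and> m (pr1 d) (prv a b) = Some b"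
proof -
  obtain c where c: "aap m (m (pr d) a) (Some b) = Some c" "m (pr0 d) c = Some a" "m (pr1 d) c = Some b"
    using pr_ex[of a b] by blast
  then have "prv a b = c" unfolding prv_def by simp
  then show ?thesis using c by simp
qed
lemma prax[simp]: "aap m (m (pr d) a) (Some b) = Some (prv a b)"
  using pr_all by blast
lemma pr0ax[simp]: "m (pr0 d) (prv a b) = Some a"
  using pr_all by blast
lemma pr1ax[simp]: "m (pr1 d) (prv a b) = Some b"
  using pr_all by blast
lemma prv_inj[simp]: "prv a b = prv a' b' \<longleftrightarrow> a = a' \<and> b = b'"
proof
  assume "prv a b = prv a' b'"
  then have "m (pr0 d) (prv a b) = m (pr0 d) (prv a' b')" "m (pr1 d) (prv a b) = m (pr1 d) (prv a' b')" by simp_all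
  then show "a = a' \<and> b = b'" by simp
qed simp

lemma code_inj[simp]: "code d xs = code d ys \<longleftrightarrow> xs = ys"
  using valid unfolding valid_data_def inj_def by blast

definition IFt :: "'a ct \<Rightarrow> 'a ct \<Rightarrow> 'a ct \<Rightarrow> 'a ct" where
  "IFt b x y = b \<bullet> lam 99 x \<bullet> lam 99 y \<bullet> C K"

lemma ev_IF_tt[simp]: "ev e b = Some (tt d) \<Longrightarrow> ev e (IFt b x y) = ev (e(99:=K)) x"
  by (simp add: IFt_def)
lemma ev_IF_ff[simp]: "ev e b = Some (ff d) \<Longrightarrow> ev e (IFt b x y) = ev (e(99:=K)) y"
  by (simp add: IFt_def)

definition LET :: "nat \<Rightarrow> 'a ct \<Rightarrow> 'a ct \<Rightarrow> 'a ct" where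
  "LET n s t = lam n t \<bullet> s"

lemma ev_LET[simp]: "ev e s = Some a \<Longrightarrow> ev e (LET n s t) = ev (e(n:=a)) t"
  by (simp add: LET_def)

abbreviation nilv where "nilv \<equiv> code d []"

definition SNOCF where
  "SNOCF = lv env0 0 (lam 1 (lam 2 (IFt (C isnil \<bullet> V 1) (C cons \<bullet> V 2 \<bullet> C nilv)
     (C cons \<bullet> (C hd \<bullet> V 1) \<bullet> (V 0 \<bullet> (C tl \<bullet> V 1) \<bullet> V 2)))))"

definition SNOC where "SNOC = zfix SNOCF"

lemma SNOC_unf: "m SNOC a = aap m (m SNOCF SNOC) (Some a)"
  unfolding SNOC_def by (rule zfix_app)

lemma snoc[simp]: "aap m (m SNOC (code d us)) (Some a) = Some (code d (us @ [a]))"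
proof (induction us)
  case Nil
  show ?case by (subst SNOC_unf) (simp add: SNOCF_def)
next
  case (Cons b us)
  show ?case by (subst SNOC_unf) (simp add: SNOCF_def Cons.IH)
qed

end

context pcad begin

definition runs where
  "runs Or P x ws c \<longleftrightarrow> (\<forall>i<length ws. \<exists>v. m P (code d (x # take i ws)) = Some (prv (ff d) v) \<and> Or v = Some (ws!i))
     \<and> m P (code d (x # ws)) = Some (prv (tt d) c)"

lemma runs_res: "runs Or P x ws c \<longleftrightarrow> dialogue m d Or P x ws \<and> m P (code d (x#ws)) = aap m (m (pr d) (tt d)) (Some c)"
  by (simp add: runs_def dialogue_def)

definition runsE where "runsE Or P x c \<longleftrightarrow> (\<exists>ws. runs Or P x ws c)"

lemma runsE_res: "runsE Or P x c \<longleftrightarrow> rel_app_res m d Or P x c"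
  by (simp add: runsE_def rel_app_res_def runs_res)

definition runsT where "runsT Or e t x c \<longleftrightarrow> (\<exists>P. ev e t = Some P \<and> runsE Or P x c)"

definition RET2 where "RET2 = lv env0 0 (lam 98 (C (pr d) \<bullet> C (tt d) \<bullet> V 0))"
definition RETt where "RETt t = C RET2 \<bullet> t"

lemma runsT_RET: "ev e t = Some c \<Longrightarrow> runsT Or e (RETt t) x c"
  by (simp add: runsT_def RETt_def RET2_def runsE_def runs_def exI[where x="[]"])

definition INPUTt where "INPUTt = C (lv env0 98 (C (pr d) \<bullet> C (tt d) \<bullet> (C hd \<bullet> V 98)))"

lemma runsT_INPUT: "runsT Or e INPUTt x x"
  by (simp add: runsT_def INPUTt_def runsE_def runs_def exI[where x="[]"])

definition PRG2 where "PRG2 = lv env0 0 (lam 1 (lam 98 (V 0 \<bullet> (C cons \<bullet> V 1 \<bullet> (C tl \<bullet> V 98)))))"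
definition PRGt where "PRGt s t = C PRG2 \<bullet> s \<bullet> t"

lemma runsT_PRG: "ev e s = Some E \<Longrightarrow> ev e t = Some Y \<Longrightarrow> runsE Or E Y c \<Longrightarrow> runsT Or e (PRGt s t) x c"
  unfolding runsT_def PRGt_def PRG2_def runsE_def runs_def by simp

definition QRY1 where "QRY1 = lv env0 0 (lam 98 (IFt (C isnil \<bullet> (C tl \<bullet> V 98)) (C (pr d) \<bullet> C (ff d) \<bullet> V 0)
   (C (pr d) \<bullet> C (tt d) \<bullet> (C hd \<bullet> (C tl \<bullet> V 98)))))"
definition QUERYt where "QUERYt s = C QRY1 \<bullet> s"

lemma runsT_QUERY: "ev e s = Some q \<Longrightarrow> Or q = Some u \<Longrightarrow> runsT Or e (QUERYt s) x u"
  unfolding runsT_def QUERYt_def QRY1_def runsE_def runs_def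
  by (rule exI, rule conjI, simp, rule exI[where x="[u]"], simp)

lemma runsT_IF_tt: "ev e b = Some (tt d) \<Longrightarrow> runsT Or (e(99:=K)) p x c \<Longrightarrow> runsT Or e (IFt b p q) x c"
  by (simp add: runsT_def)
lemma runsT_IF_ff: "ev e b = Some (ff d) \<Longrightarrow> runsT Or (e(99:=K)) q x c \<Longrightarrow> runsT Or e (IFt b p q) x c"
  by (simp add: runsT_def)
lemma runsT_LET: "ev e s = Some a \<Longrightarrow> runsT Or (e(n:=a)) t x c \<Longrightarrow> runsT Or e (LET n s t) x c"
  by (simp add: runsT_def)

definition LOOPBF where
  "LOOPBF = lv env0 0 (lam 1 (lam 2 (lam 3 (lam 4 (lam 5 (LET 6 (V 1 \<bullet> V 4)
     (IFt (C (pr0 d) \<bullet> V 6) (V 2 \<bullet> (C (pr1 d) \<bullet> V 6) \<bullet> (C cons \<bullet> V 3 \<bullet> V 5))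
        (IFt (C isnil \<bullet> V 5) (V 6)
           (V 0 \<bullet> V 1 \<bullet> V 2 \<bullet> V 3 \<bullet> (C SNOC \<bullet> V 4 \<bullet> (C hd \<bullet> V 5)) \<bullet> (C tl \<bullet> V 5))))))))))"

definition LOOPB where "LOOPB = zfix LOOPBF"

lemma LOOPB_unf: "m LOOPB a = aap m (m LOOPBF LOOPB) (Some a)"
  unfolding LOOPB_def by (rule zfix_app)

lemma loopA:
  assumes q: "\<forall>i < length ws1. m P (code d (x # take i ws1)) = Some (prv (ff d) (vv i))"
    and i: "i < length ws1"
  shows "k \<le> i \<Longrightarrow> aap m (aap m (aap m (aap m (m LOOPB P) (Some Kc)) (Some x)) (Some (code d (x # take k ws1))))
     (Some (code d (drop k (take i ws1)))) = Some (prv (ff d) (vv i))"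
proof (induction "i - k" arbitrary: k)
  case 0
  then have "k = i" by simp
  then show ?case using q i by (subst LOOPB_unf) (simp add: LOOPBF_def)
next
  case (Suc n)
  then have ki: "k < i" by simp
  then have ih: "aap m (aap m (aap m (aap m (m LOOPB P) (Some Kc)) (Some x)) (Some (code d (x # take (Suc k) ws1))))
     (Some (code d (drop (Suc k) (take i ws1)))) = Some (prv (ff d) (vv i))"
    using Suc by simp
  have kl: "k < length (take i ws1)" using ki i by simp
  have dr: "drop k (take i ws1) = ws1 ! k # drop (Suc k) (take i ws1)"
    using Cons_nth_drop_Suc[OF kl, symmetric] ki by simp
  have tk: "take (Suc k) ws1 = take k ws1 @ [ws1 ! k]"
    using ki i by (simp add: take_Suc_conv_app_nth)
  show ?case
    apply (subst LOOPB_unf)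
    using q ki i ih unfolding dr tk by (simp add: LOOPBF_def)
qed

lemma loopB:
  assumes q: "\<forall>i < length ws1. m P (code d (x # take i ws1)) = Some (prv (ff d) (vv i))"
    and fin: "m P (code d (x # ws1)) = Some (prv (tt d) y)"
    and kq: "m Kc y = Some Q"
  shows "k \<le> length ws1 \<Longrightarrow> aap m (aap m (aap m (aap m (m LOOPB P) (Some Kc)) (Some x)) (Some (code d (x # take k ws1))))
     (Some (code d (drop k ws1 @ rr))) = m Q (code d (x # rr))"
proof (induction "length ws1 - k" arbitrary: k)
  case 0
  then have "k = length ws1" by simp
  then show ?case using fin kq by (subst LOOPB_unf) (simp add: LOOPBF_def)
next
  case (Suc n)
  then have ki: "k < length ws1" by simp
  then have ih: "aap m (aap m (aap m (aap m (m LOOPB P) (Some Kc)) (Some x)) (Some (code d (x # take (Suc k) ws1))))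
     (Some (code d (drop (Suc k) ws1 @ rr))) = m Q (code d (x # rr))"
    using Suc by simp
  have dr: "drop k ws1 @ rr = ws1 ! k # (drop (Suc k) ws1 @ rr)"
    using ki by (simp add: Cons_nth_drop_Suc)
  have tk: "take (Suc k) ws1 = take k ws1 @ [ws1 ! k]"
    using ki by (simp add: take_Suc_conv_app_nth)
  show ?case
    apply (subst LOOPB_unf)
    using q ki ih unfolding dr tk by (simp add: LOOPBF_def)
qed

definition BIND2 where
  "BIND2 = lv env0 1 (lam 2 (lam 98 (C LOOPB \<bullet> V 1 \<bullet> V 2 \<bullet> (C hd \<bullet> V 98) \<bullet> (C cons \<bullet> (C hd \<bullet> V 98) \<bullet> C nilv) \<bullet> (C tl \<bullet> V 98))))"

definition BINDt where "BINDt p n q = C BIND2 \<bullet> p \<bullet> lam n q"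

lemma runs_bind:
  assumes r1: "runs Or P x ws1 y" and kq: "m Kc y = Some Q" and r2: "runs Or Q x ws2 c"
  shows "runs Or (lv (env0(1:=P, 2:=Kc)) 98 (C LOOPB \<bullet> V 1 \<bullet> V 2 \<bullet> (C hd \<bullet> V 98) \<bullet> (C cons \<bullet> (C hd \<bullet> V 98) \<bullet> C nilv) \<bullet> (C tl \<bullet> V 98)))
     x (ws1 @ ws2) c"
proof -
  obtain vv where q: "\<And>i. i < length ws1 \<Longrightarrow> m P (code d (x # take i ws1)) = Some (prv (ff d) (vv i)) \<and> Or (vv i) = Some (ws1 ! i)"
    using r1 unfolding runs_def by metis
  have fin: "m P (code d (x # ws1)) = Some (prv (tt d) y)" using r1 unfolding runs_def by blast
  have q1: "\<forall>i < length ws1. m P (code d (x # take i ws1)) = Some (prv (ff d) (vv i))"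
    using q by blast
  note A = loopA[OF q1]
  note B = loopB[OF q1 fin kq]
  show ?thesis
    unfolding runs_def
  proof (intro conjI allI impI)
    fix i assume i: "i < length (ws1 @ ws2)"
    show "\<exists>v. m (lv (env0(1 := P, 2 := Kc)) 98 (C LOOPB \<bullet> V 1 \<bullet> V 2 \<bullet> (C hd \<bullet> V 98) \<bullet> (C cons \<bullet> (C hd \<bullet> V 98) \<bullet> C nilv) \<bullet> (C tl \<bullet> V 98)))
              (code d (x # take i (ws1 @ ws2))) = Some (prv (ff d) v) \<and> Or v = Some ((ws1 @ ws2) ! i)"
    proof (cases "i < length ws1")
      case True
      have a: "aap m (aap m (aap m (aap m (m LOOPB P) (Some Kc)) (Some x)) (Some (code d [x])))
        (Some (code d (take i ws1))) = Some (prv (ff d) (vv i))" using A[OF True, where k=0] by simp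
      show ?thesis
        apply (rule exI[of _ "vv i"])
        using a q[OF True] True by (simp add: nth_append)
    next
      case False
      then have j: "i - length ws1 < length ws2" using i by simp
      obtain w where w: "m Q (code d (x # take (i - length ws1) ws2)) = Some (prv (ff d) w)"
          "Or w = Some (ws2 ! (i - length ws1))"
        using r2 j unfolding runs_def by blast
      have tk: "take i (ws1 @ ws2) = ws1 @ take (i - length ws1) ws2" using False by simp
      have b: "aap m (aap m (aap m (aap m (m LOOPB P) (Some Kc)) (Some x)) (Some (code d [x])))
        (Some (code d (ws1 @ take (i - length ws1) ws2))) = m Q (code d (x # take (i - length ws1) ws2))"
        using B[where k=0 and rr="take (i - length ws1) ws2"] by simp
      show ?thesis
        apply (rule exI[of _ w])
        unfolding tk using b w False by (simp add: nth_append)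
    qed
  next
    have b: "aap m (aap m (aap m (aap m (m LOOPB P) (Some Kc)) (Some x)) (Some (code d [x])))
        (Some (code d (ws1 @ ws2))) = m Q (code d (x # ws2))"
        using B[where k=0 and rr=ws2] by simp
    show "m (lv (env0(1 := P, 2 := Kc)) 98 (C LOOPB \<bullet> V 1 \<bullet> V 2 \<bullet> (C hd \<bullet> V 98) \<bullet> (C cons \<bullet> (C hd \<bullet> V 98) \<bullet> C nilv) \<bullet> (C tl \<bullet> V 98)))
      (code d (x # ws1 @ ws2)) = Some (prv (tt d) c)"
      using b r2 unfolding runs_def by simp
  qed
qed

lemma runsT_BIND: "runsT Or e p x y \<Longrightarrow> runsT Or (e(n:=y)) q x c \<Longrightarrow> runsT Or e (BINDt p n q) x c"
proof -
  assume a1: "runsT Or e p x y" and a2: "runsT Or (e(n:=y)) q x c"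
  obtain P ws1 where P: "ev e p = Some P" "runs Or P x ws1 y" using a1 unfolding runsT_def runsE_def by blast
  obtain Q ws2 where Q: "ev (e(n:=y)) q = Some Q" "runs Or Q x ws2 c" using a2 unfolding runsT_def runsE_def by blast
  have "m (lv e n q) y = Some Q" using Q by simp
  note rb = runs_bind[OF P(2) this Q(2)]
  show ?thesis unfolding runsT_def runsE_def BINDt_def BIND2_def
    using P(1) rb by auto
qed

end

context pcad begin

lemma App_iff: "rel_app m d Or P x = Some c \<longleftrightarrow> runsE Or P x c"
  using rel_app_iff[OF valid nontriv] runsE_res by simp

lemma App_noq: "m P (code d [x]) = Some (prv (tt d) c) \<Longrightarrow> rel_app m d Or P x = Some c"
  unfolding App_iff runsE_def runs_def by (intro exI[of _ "[]"]) simp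

definition retv where "retv a = lv (env0(0:=a)) 98 (C (pr d) \<bullet> C (tt d) \<bullet> V 0)"
definition liftv where "liftv f = lv (env0(0:=f)) 98 (C (pr d) \<bullet> C (tt d) \<bullet> (V 0 \<bullet> (C hd \<bullet> V 98)))"
definition INPUTv where "INPUTv = lv env0 98 (C (pr d) \<bullet> C (tt d) \<bullet> (C hd \<bullet> V 98))"
definition ttO where "ttO = lv env0 98 (C (pr d) \<bullet> C (tt d) \<bullet> (C RET2 \<bullet> (C hd \<bullet> V 98)))"
definition ffO where "ffO = retv INPUTv"
definition PR1 where "PR1 = lv env0 0 (lam 98 (C (pr d) \<bullet> C (tt d) \<bullet> (C (pr d) \<bullet> V 0 \<bullet> (C hd \<bullet> V 98))))"
definition prO where "prO = lv env0 98 (C (pr d) \<bullet> C (tt d) \<bullet> (C PR1 \<bullet> (C hd \<bullet> V 98)))"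
definition CONS1 where "CONS1 = lv env0 0 (lam 98 (C (pr d) \<bullet> C (tt d) \<bullet> (C cons \<bullet> V 0 \<bullet> (C hd \<bullet> V 98))))"
definition consO where "consO = lv env0 98 (C (pr d) \<bullet> C (tt d) \<bullet> (C CONS1 \<bullet> (C hd \<bullet> V 98)))"
definition isnilO where "isnilO = lv env0 98 (C (pr d) \<bullet> C (tt d) \<bullet> (C isnil \<bullet> (C hd \<bullet> V 98) \<bullet> C ttO \<bullet> C ffO))"

lemma RET2_app[simp]: "m RET2 a = Some (retv a)" by (simp add: RET2_def retv_def)

lemma retv_A[simp]: "rel_app m d Or (retv a) x = Some a" by (rule App_noq) (simp add: retv_def)
lemma liftv_A: "m f x = Some y \<Longrightarrow> rel_app m d Or (liftv f) x = Some y" by (rule App_noq) (simp add: liftv_def)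
lemma INPUT_A[simp]: "rel_app m d Or INPUTv x = Some x" by (rule App_noq) (simp add: INPUTv_def)
lemma ttO_A[simp]: "rel_app m d Or ttO x = Some (retv x)" by (rule App_noq) (simp add: ttO_def)
lemma ffO_A[simp]: "rel_app m d Or ffO x = Some INPUTv" by (simp add: ffO_def)
lemma PR1_app[simp]: "m PR1 a = Some (lv (env0(0:=a)) 98 (C (pr d) \<bullet> C (tt d) \<bullet> (C (pr d) \<bullet> V 0 \<bullet> (C hd \<bullet> V 98))))"
  by (simp add: PR1_def)
lemma prO_A[simp]: "rel_app m d Or prO a = Some (lv (env0(0:=a)) 98 (C (pr d) \<bullet> C (tt d) \<bullet> (C (pr d) \<bullet> V 0 \<bullet> (C hd \<bullet> V 98))))"
  by (rule App_noq) (simp add: prO_def)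
lemma prO_A2[simp]: "rel_app m d Or (lv (env0(0:=a)) 98 (C (pr d) \<bullet> C (tt d) \<bullet> (C (pr d) \<bullet> V 0 \<bullet> (C hd \<bullet> V 98)))) b = Some (prv a b)"
  by (rule App_noq) simp
lemma CONS1_app[simp]: "m CONS1 a = Some (lv (env0(0:=a)) 98 (C (pr d) \<bullet> C (tt d) \<bullet> (C cons \<bullet> V 0 \<bullet> (C hd \<bullet> V 98))))"
  by (simp add: CONS1_def)
lemma consO_A[simp]: "rel_app m d Or consO a = Some (lv (env0(0:=a)) 98 (C (pr d) \<bullet> C (tt d) \<bullet> (C cons \<bullet> V 0 \<bullet> (C hd \<bullet> V 98))))"
  by (rule App_noq) (simp add: consO_def)
lemma consO_A2[simp]: "rel_app m d Or (lv (env0(0:=a)) 98 (C (pr d) \<bullet> C (tt d) \<bullet> (C cons \<bullet> V 0 \<bullet> (C hd \<bullet> V 98)))) (code d us) = Some (code d (a # us))"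
  by (rule App_noq) simp

lemma valid_ext: "\<exists>dd. valid_data (rel_app m d Or) dd"
proof -
  let ?X = "rel_app m d Or"
  let ?dd = "\<lparr>tt = ttO, ff = ffO, pr = prO, pr0 = liftv (pr0 d), pr1 = liftv (pr1 d), code = code d\<rparr>"
  have 1: "\<forall>a b. aap ?X (?X (tt ?dd) a) (Some b) = Some a" by simp
  have 2: "\<forall>a b. aap ?X (?X (ff ?dd) a) (Some b) = Some b" by simp
  have 3: "\<forall>a b. \<exists>c. aap ?X (?X (pr ?dd) a) (Some b) = Some c \<and> ?X (pr0 ?dd) c = Some a \<and> ?X (pr1 ?dd) c = Some b"
    by (simp add: liftv_A)
  have 4: "inj (code ?dd)" using valid unfolding valid_data_def by simp
  have 5: "(\<forall>a us. aap ?X (?X consO a) (Some (code ?dd us)) = Some (code ?dd (a # us))) \<and>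
        (\<forall>a us. ?X (liftv hd) (code ?dd (a # us)) = Some a) \<and>
        (\<forall>a us. ?X (liftv tl) (code ?dd (a # us)) = Some (code ?dd us)) \<and>
        ?X isnilO (code ?dd []) = Some (tt ?dd) \<and>
        (\<forall>a us. ?X isnilO (code ?dd (a # us)) = Some (ff ?dd))"
    by (simp add: liftv_A) (intro conjI allI; rule App_noq; simp add: isnilO_def)
  show ?thesis unfolding valid_data_def
    apply (rule exI[of _ ?dd])
    using 1 2 3 4 5 by blast
qed

end

context pcad begin

definition tagO :: "('a \<Rightarrow> 'a option) \<Rightarrow> ('a \<Rightarrow> 'a option) \<Rightarrow> 'a \<Rightarrow> 'a option" where
  "tagO f g q = (if \<exists>v. q = prv (tt d) v then f (THE v. q = prv (tt d) v)
     else if \<exists>v. q = prv (ff d) v then g (THE v. q = prv (ff d) v) else None)"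

lemma tagO_tt[simp]: "tagO f g (prv (tt d) v) = f v"
  unfolding tagO_def by auto
lemma tagO_ff[simp]: "tagO f g (prv (ff d) v) = g v"
  unfolding tagO_def by auto
lemma tagO_cases: "tagO f g q = Some u \<Longrightarrow> (\<exists>v. q = prv (tt d) v \<and> f v = Some u) \<or> (\<exists>v. q = prv (ff d) v \<and> g v = Some u)"
  unfolding tagO_def by (auto split: if_splits)

lemma runsT_cong: "ev e t = ev e' t' \<Longrightarrow> runsT Or e' t' x c \<Longrightarrow> runsT Or e t x c"
  by (simp add: runsT_def)

definition TAG2 where "TAG2 = lv env0 0 (lam 1 (lam 98 (LET 2 (V 0 \<bullet> (C cons \<bullet> V 1 \<bullet> (C tl \<bullet> V 98)))
   (IFt (C (pr0 d) \<bullet> V 2) (V 2) (C (pr d) \<bullet> C (ff d) \<bullet> (C (pr d) \<bullet> C (tt d) \<bullet> (C (pr1 d) \<bullet> V 2)))))))"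
definition TAGt where "TAGt s t = C TAG2 \<bullet> s \<bullet> t"

lemma runsT_TAG:
  assumes "ev e s = Some E" "ev e t = Some Y" "runsE f E Y c"
  shows "runsT (tagO f g) e (TAGt s t) x c"
proof -
  obtain ws where r: "runs f E Y ws c" using assms(3) unfolding runsE_def by blast
  have "runs (tagO f g) (lv (env0(0:=E, 1:=Y)) 98 (LET 2 (V 0 \<bullet> (C cons \<bullet> V 1 \<bullet> (C tl \<bullet> V 98)))
   (IFt (C (pr0 d) \<bullet> V 2) (V 2) (C (pr d) \<bullet> C (ff d) \<bullet> (C (pr d) \<bullet> C (tt d) \<bullet> (C (pr1 d) \<bullet> V 2)))))) x ws c"
    unfolding runs_def
  proof (intro conjI allI impI)
    fix i assume i: "i < length ws"
    then obtain v where v: "m E (code d (Y # take i ws)) = Some (prv (ff d) v)" "f v = Some (ws ! i)"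
      using r unfolding runs_def by blast
    then show "\<exists>v. m (lv (env0(0:=E, 1:=Y)) 98 (LET 2 (V 0 \<bullet> (C cons \<bullet> V 1 \<bullet> (C tl \<bullet> V 98)))
   (IFt (C (pr0 d) \<bullet> V 2) (V 2) (C (pr d) \<bullet> C (ff d) \<bullet> (C (pr d) \<bullet> C (tt d) \<bullet> (C (pr1 d) \<bullet> V 2))))))
       (code d (x # take i ws)) = Some (prv (ff d) v) \<and> tagO f g v = Some (ws ! i)"
      by (intro exI[of _ "prv (tt d) v"]) simp
  next
    have "m E (code d (Y # ws)) = Some (prv (tt d) c)" using r unfolding runs_def by blast
    then show "m (lv (env0(0:=E, 1:=Y)) 98 (LET 2 (V 0 \<bullet> (C cons \<bullet> V 1 \<bullet> (C tl \<bullet> V 98)))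
   (IFt (C (pr0 d) \<bullet> V 2) (V 2) (C (pr d) \<bullet> C (ff d) \<bullet> (C (pr d) \<bullet> C (tt d) \<bullet> (C (pr1 d) \<bullet> V 2))))))
       (code d (x # ws)) = Some (prv (tt d) c)" by simp
  qed
  then show ?thesis unfolding runsT_def runsE_def TAGt_def TAG2_def using assms(1,2) by auto
qed

end

locale simA = pcad m K S d cons hd tl isnil for m K S d cons hd tl isnil +
  fixes f g :: "'a \<Rightarrow> 'a option" and df :: "'a pca_data" and consf :: 'a
  assumes validf: "valid_data (rel_app m d f) df"
  and consfax: "aap (rel_app m d f) (rel_app m d f consf a) (Some (code df us)) = Some (code df (a # us))"
begin

abbreviation Af where "Af \<equiv> rel_app m d f"

lemma ntf: "tt df \<noteq> ff df"
  using vd_nontriv[OF validf nontriv] .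

lemma consf_ex: "\<exists>c1. Af consf a = Some c1 \<and> (\<forall>us. Af c1 (code df us) = Some (code df (a # us)))"
proof -
  obtain c1 where "Af consf a = Some c1"
    using consfax[of a "[]"] by (cases "Af consf a") auto
  then show ?thesis using consfax[of a] by auto
qed

lemma runsE_Af: "Af E Y = Some c \<Longrightarrow> runsE f E Y c"
  using App_iff by blast

definition BUILDB where
  "BUILDB = IFt (C isnil \<bullet> V 1) (RETt (C (code df [])))
     (BINDt (V 0 \<bullet> (C tl \<bullet> V 1)) 2 (BINDt (TAGt (C consf) (C hd \<bullet> V 1)) 3 (TAGt (V 3) (V 2))))"
definition BUILDF where "BUILDF = lv env0 0 (lam 1 BUILDB)"
definition BUILD where "BUILD = zfix BUILDF"

lemma ev_BUILD: "ev e (C BUILD \<bullet> C l) = ev (env0(0:=BUILD, 1:=l)) BUILDB"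
proof -
  have "m BUILD l = aap m (m BUILDF BUILD) (Some l)" unfolding BUILD_def by (rule zfix_app)
  then show ?thesis by (simp add: BUILDF_def)
qed

lemma BUILD_runs: "runsT (tagO f g) e (C BUILD \<bullet> C (code d us)) x (code df us)"
proof (induction us arbitrary: e)
  case Nil
  show ?case
    apply (rule runsT_cong[OF ev_BUILD])
    unfolding BUILDB_def
    apply (rule runsT_IF_tt, simp)
    apply (rule runsT_RET, simp)
    done
next
  case (Cons b us)
  obtain c1 where c1: "Af consf b = Some c1" "\<And>us. Af c1 (code df us) = Some (code df (b # us))"
    using consf_ex by blast
  show ?case
    apply (rule runsT_cong[OF ev_BUILD])
    unfolding BUILDB_def
    apply (rule runsT_IF_ff, simp)
    apply (rule runsT_BIND[where y="code df us"])
     apply (rule runsT_cong[OF _ Cons.IH], simp)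
    apply (rule runsT_BIND[where y="c1"])
     apply (rule runsT_TAG, simp, simp)
     apply (rule runsE_Af, simp add: c1)
    apply (rule runsT_TAG, simp, simp)
    apply (rule runsE_Af, simp add: c1)
    done
qed

definition LOOPAB where
  "LOOPAB = BINDt (C BUILD \<bullet> V 3) 4
   (BINDt (TAGt (C consf) (V 2)) 5
   (BINDt (TAGt (V 5) (V 4)) 6
   (BINDt (TAGt (V 1) (V 6)) 7
   (BINDt (TAGt (C (pr0 df)) (V 7)) 8
   (BINDt (TAGt (V 8) (C (tt d))) 9
   (BINDt (TAGt (V 9) (C (ff d))) 10
   (BINDt (TAGt (C (pr1 df)) (V 7)) 11
   (IFt (V 10) (RETt (V 11))
     (BINDt (QUERYt (C (pr d) \<bullet> C (ff d) \<bullet> V 11)) 12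
       (V 0 \<bullet> V 1 \<bullet> V 2 \<bullet> (C SNOC \<bullet> V 3 \<bullet> V 12)))))))))))"
definition LOOPAF where "LOOPAF = lv env0 0 (lam 1 (lam 2 (lam 3 LOOPAB)))"
definition LOOPA where "LOOPA = zfix LOOPAF"

lemma ev_LOOPA: "ev e (C LOOPA \<bullet> C a \<bullet> C a' \<bullet> C l) = ev (env0(0:=LOOPA, 1:=a, 2:=a', 3:=l)) LOOPAB"
proof -
  have "m LOOPA a = aap m (m LOOPAF LOOPA) (Some a)" unfolding LOOPA_def by (rule zfix_app)
  then show ?thesis by (simp add: LOOPAF_def)
qed

lemma simA_main:
  assumes app: "rel_app Af df g a a' = Some c"
  shows "runsT (tagO f g) e (C LOOPA \<bullet> C a \<bullet> C a' \<bullet> C (code d [])) x c"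
proof -
  have "rel_app_res Af df g a a' c" using app rel_app_iff[OF validf ntf] by blast
  then obtain us where D: "dialogue Af df g a a' us"
    and F: "Af a (code df (a' # us)) = aap Af (Af (pr df) (tt df)) (Some c)"
    unfolding rel_app_res_def by blast
  obtain c1 where c1: "Af consf a' = Some c1" "\<And>us. Af c1 (code df us) = Some (code df (a' # us))"
    using consf_ex by blast
  have step: "k \<le> length us \<Longrightarrow> runsT (tagO f g) e (C LOOPA \<bullet> C a \<bullet> C a' \<bullet> C (code d (take k us))) x c" for k e
  proof (induction "length us - k" arbitrary: k e)
    case 0
    then have k: "take k us = us" by simp
    let ?R = "gpr Af df (tt df) c"
    have R: "Af a (code df (a' # us)) = Some ?R" using F gpr_all[OF validf] by simp
    have R0: "Af (pr0 df) ?R = Some (tt df)" "Af (pr1 df) ?R = Some c" using gpr_all[OF validf] by simp_all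
    obtain z where z: "Af (tt df) (tt d) = Some z" "\<And>b. Af z b = Some (tt d)" using vd_tt[OF validf] by blast
    show ?case
      unfolding k
      apply (rule runsT_cong[OF ev_LOOPA])
      unfolding LOOPAB_def
      apply (rule runsT_BIND[where y="code df us"])
       apply (rule runsT_cong[OF _ BUILD_runs], simp)
      apply (rule runsT_BIND[where y="c1"])
       apply (rule runsT_TAG, simp, simp, rule runsE_Af, simp add: c1)
      apply (rule runsT_BIND[where y="code df (a' # us)"])
       apply (rule runsT_TAG, simp, simp, rule runsE_Af, simp add: c1)
      apply (rule runsT_BIND[where y="?R"])
       apply (rule runsT_TAG, simp, simp, rule runsE_Af, simp add: R)
      apply (rule runsT_BIND[where y="tt df"])
       apply (rule runsT_TAG, simp, simp, rule runsE_Af, simp add: R0)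
      apply (rule runsT_BIND[where y="z"])
       apply (rule runsT_TAG, simp, simp, rule runsE_Af, simp add: z)
      apply (rule runsT_BIND[where y="tt d"])
       apply (rule runsT_TAG, simp, simp, rule runsE_Af, simp add: z)
      apply (rule runsT_BIND[where y="c"])
       apply (rule runsT_TAG, simp, simp, rule runsE_Af, simp add: R0)
      apply (rule runsT_IF_tt, simp)
      apply (rule runsT_RET, simp)
      done
  next
    case (Suc n)
    then have kl: "k < length us" by simp
    have ih: "runsT (tagO f g) e' (C LOOPA \<bullet> C a \<bullet> C a' \<bullet> C (code d (take k us @ [us ! k]))) x c" for e'
      using Suc(1)[of "Suc k" e'] Suc(2,3) kl by (simp add: take_Suc_conv_app_nth)
    obtain v where v: "Af a (code df (a' # take k us)) = aap Af (Af (pr df) (ff df)) (Some v)" "g v = Some (us ! k)"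
      using D kl unfolding dialogue_def by blast
    let ?R = "gpr Af df (ff df) v"
    have R: "Af a (code df (a' # take k us)) = Some ?R" using v(1) gpr_all[OF validf] by simp
    have R0: "Af (pr0 df) ?R = Some (ff df)" "Af (pr1 df) ?R = Some v" using gpr_all[OF validf] by simp_all
    obtain z where z: "Af (ff df) (tt d) = Some z" "\<And>b. Af z b = Some b" using vd_ff[OF validf] by blast
    show ?case
      apply (rule runsT_cong[OF ev_LOOPA])
      unfolding LOOPAB_def
      apply (rule runsT_BIND[where y="code df (take k us)"])
       apply (rule runsT_cong[OF _ BUILD_runs], simp)
      apply (rule runsT_BIND[where y="c1"])
       apply (rule runsT_TAG, simp, simp, rule runsE_Af, simp add: c1)
      apply (rule runsT_BIND[where y="code df (a' # take k us)"])
       apply (rule runsT_TAG, simp, simp, rule runsE_Af, simp add: c1)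
      apply (rule runsT_BIND[where y="?R"])
       apply (rule runsT_TAG, simp, simp, rule runsE_Af, simp add: R)
      apply (rule runsT_BIND[where y="ff df"])
       apply (rule runsT_TAG, simp, simp, rule runsE_Af, simp add: R0)
      apply (rule runsT_BIND[where y="z"])
       apply (rule runsT_TAG, simp, simp, rule runsE_Af, simp add: z)
      apply (rule runsT_BIND[where y="ff d"])
       apply (rule runsT_TAG, simp, simp, rule runsE_Af, simp add: z)
      apply (rule runsT_BIND[where y="v"])
       apply (rule runsT_TAG, simp, simp, rule runsE_Af, simp add: R0)
      apply (rule runsT_IF_ff, simp)
      apply (rule runsT_BIND[where y="us ! k"])
       apply (rule runsT_QUERY, simp, simp add: v)
      apply (rule runsT_cong[OF _ ih], simp)
      done
  qed
  show ?thesis using step[of 0 e] by simp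
qed

end

locale simB = pcad m K S d cons hd tl isnil for m K S d cons hd tl isnil +
  fixes f g :: "'a \<Rightarrow> 'a option" and dg :: "'a pca_data" and hdg tlg isnilg :: 'a
  assumes validg: "valid_data (rel_app m d g) dg"
  and hdgax: "rel_app m d g hdg (code dg (a # us)) = Some a"
  and tlgax: "rel_app m d g tlg (code dg (a # us)) = Some (code dg us)"
  and isnilg0: "rel_app m d g isnilg (code dg []) = Some (tt dg)"
  and isnilg1: "rel_app m d g isnilg (code dg (a # us)) = Some (ff dg)"
begin

abbreviation Ag where "Ag \<equiv> rel_app m d g"

lemma ntg: "tt dg \<noteq> ff dg"
  using vd_nontriv[OF validg nontriv] .

lemma runsE_Ag: "Ag E Y = Some c \<Longrightarrow> runsE g E Y c"
  using App_iff by blast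

definition LOOP2B where
  "LOOP2B = LET 4 (V 1 \<bullet> (C cons \<bullet> C K \<bullet> V 2))
  (IFt (C (pr0 d) \<bullet> V 4)
     (BINDt (PRGt (C (pr dg)) (C (tt dg))) 5 (PRGt (V 5) (C (pr1 d) \<bullet> V 4)))
     (LET 6 (C (pr1 d) \<bullet> V 4)
      (LET 7 (C (pr1 d) \<bullet> V 6)
       (IFt (C (pr0 d) \<bullet> V 6)
          (BINDt (PRGt (C isnilg) (V 3)) 8
           (BINDt (PRGt (V 8) (C (tt d))) 9
            (BINDt (PRGt (V 9) (C (ff d))) 10
             (IFt (V 10)
                (BINDt (PRGt (C (pr dg)) (C (ff dg))) 11 (PRGt (V 11) (V 7)))
                (BINDt (PRGt (C hdg) (V 3)) 12
                  (BINDt (PRGt (C tlg) (V 3)) 13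
                    (V 0 \<bullet> V 1 \<bullet> (C SNOC \<bullet> V 2 \<bullet> V 12) \<bullet> V 13)))))))
          (BINDt (QUERYt (V 7)) 14 (V 0 \<bullet> V 1 \<bullet> (C SNOC \<bullet> V 2 \<bullet> V 14) \<bullet> V 3))))))"
definition LOOP2F where "LOOP2F = lv env0 0 (lam 1 (lam 2 (lam 3 LOOP2B)))"
definition LOOP2 where "LOOP2 = zfix LOOP2F"

lemma ev_LOOP2: "ev e (C LOOP2 \<bullet> C a \<bullet> C b \<bullet> C l) = ev (env0(0:=LOOP2, 1:=a, 2:=b, 3:=l)) LOOP2B"
proof -
  have "m LOOP2 a = aap m (m LOOP2F LOOP2) (Some a)" unfolding LOOP2_def by (rule zfix_app)
  then show ?thesis by (simp add: LOOP2F_def)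
qed

end

locale simB_run = simB m K S d cons hd tl isnil f g dg hdg tlg isnilg
  for m K S d cons hd tl isnil f g dg hdg tlg isnilg +
  fixes P :: 'a and os :: "'a list" and c :: 'a and qf :: "nat \<Rightarrow> 'a"
  assumes fin: "m P (code d (K # os)) = Some (prv (tt d) c)"
  and qax: "\<forall>k<length os. m P (code d (K # take k os)) = Some (prv (ff d) (qf k)) \<and> tagO f g (qf k) = Some (os ! k)"
begin

definition isF where "isF k \<longleftrightarrow> (\<exists>v. qf k = prv (tt d) v)"
definition zs where "zs = map (nth os) (filter isF [0..<length os])"
definition fc where "fc k = length (filter isF [0..<k])"

lemma fc_Suc: "fc (Suc k) = fc k + (if isF k then 1 else 0)"
  by (simp add: fc_def)

lemma fc_n: "fc (length os) = length zs"
  by (simp add: fc_def zs_def)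

lemma fc_mono: "k \<le> k' \<Longrightarrow> fc k \<le> fc k'"
  unfolding fc_def
proof -
  assume "k \<le> k'"
  then have "[0..<k'] = [0..<k] @ [k..<k']" using upt_add_eq_append[of 0 k "k' - k"] by simp
  then show "length (filter isF [0..<k]) \<le> length (filter isF [0..<k'])" by simp
qed

lemma zs_nth:
  assumes k: "k < length os" and F: "isF k"
  shows "fc k < length zs \<and> zs ! fc k = os ! k"
proof -
  have u1: "[0..<length os] = [0..<k] @ [k..<length os]"
    using upt_add_eq_append[of 0 k "length os - k"] k by simp
  have u2: "[k..<length os] = k # [Suc k..<length os]" using k by (simp add: upt_conv_Cons)
  have "[0..<length os] = [0..<k] @ [k] @ [Suc k..<length os]" using u1 u2 by simp
  then have "filter isF [0..<length os] = filter isF [0..<k] @ [k] @ filter isF [Suc k..<length os]"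
    using F by simp
  then show ?thesis unfolding zs_def fc_def by (simp add: nth_append)
qed

definition good where
  "good j y \<longleftrightarrow> (j = length zs \<and> y = gpr Ag dg (tt dg) c) \<or>
     (j < length zs \<and> (\<exists>v. f v = Some (zs ! j) \<and> y = gpr Ag dg (ff dg) v))"

lemma loop2:
  assumes j: "j \<le> length zs"
  shows "k \<le> length os \<Longrightarrow> fc k \<le> j \<Longrightarrow> \<exists>y. good j y \<and>
    runsT g e (C LOOP2 \<bullet> C P \<bullet> C (code d (take k os)) \<bullet> C (code dg (drop (fc k) (take j zs)))) x y"
proof (induction "length os - k" arbitrary: k e)
  case 0
  then have k: "k = length os" by simp
  then have jz: "j = length zs" using 0 fc_n j by simp
  obtain t1 where t1: "Ag (pr dg) (tt dg) = Some t1" "\<And>b. Ag t1 b = Some (gpr Ag dg (tt dg) b)"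
    using vd_pr1[OF validg] by blast
  show ?case
    apply (rule exI[of _ "gpr Ag dg (tt dg) c"])
    apply (rule conjI)
     apply (simp add: good_def jz)
    apply (rule runsT_cong[OF ev_LOOP2])
    unfolding LOOP2B_def k
    apply (rule runsT_LET[where a="prv (tt d) c"], simp add: fin)
    apply (rule runsT_IF_tt, simp)
    apply (rule runsT_BIND[where y=t1])
     apply (rule runsT_PRG, simp, simp, rule runsE_Ag, simp add: t1)
    apply (rule runsT_PRG, simp, simp, rule runsE_Ag, simp add: t1)
    done
next
  case (Suc n)
  then have kl: "k < length os" by simp
  have q: "m P (code d (K # take k os)) = Some (prv (ff d) (qf k))" "tagO f g (qf k) = Some (os ! k)"
    using qax kl by auto
  have tk: "take (Suc k) os = take k os @ [os ! k]" using kl by (simp add: take_Suc_conv_app_nth)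
  from tagO_cases[OF q(2)] show ?case
  proof
    assume "\<exists>v. qf k = prv (tt d) v \<and> f v = Some (os ! k)"
    then obtain v where v: "qf k = prv (tt d) v" "f v = Some (os ! k)" by blast
    then have F: "isF k" unfolding isF_def by blast
    have zn: "fc k < length zs" "zs ! fc k = os ! k" using zs_nth[OF kl F] by auto
    show ?case
    proof (cases "fc k = j")
      case True
      obtain t1 where t1: "Ag (pr dg) (ff dg) = Some t1" "\<And>b. Ag t1 b = Some (gpr Ag dg (ff dg) b)"
        using vd_pr1[OF validg] by blast
      obtain z where z: "Ag (tt dg) (tt d) = Some z" "\<And>b. Ag z b = Some (tt d)" using vd_tt[OF validg] by blast
      have dr: "drop (fc k) (take j zs) = []" using True by simp
      show ?thesis
        apply (rule exI[of _ "gpr Ag dg (ff dg) v"])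
        apply (rule conjI)
         using True zn v apply (simp add: good_def) apply blast
        apply (rule runsT_cong[OF ev_LOOP2])
        unfolding LOOP2B_def dr
        apply (rule runsT_LET[where a="prv (ff d) (qf k)"], simp add: q)
        apply (rule runsT_IF_ff, simp)
        apply (rule runsT_LET[where a="qf k"], simp)
        apply (rule runsT_LET[where a="v"], simp add: v)
        apply (rule runsT_IF_tt, simp add: v)
        apply (rule runsT_BIND[where y="tt dg"])
         apply (rule runsT_PRG, simp, simp, rule runsE_Ag, simp add: isnilg0)
        apply (rule runsT_BIND[where y="z"])
         apply (rule runsT_PRG, simp, simp, rule runsE_Ag, simp add: z)
        apply (rule runsT_BIND[where y="tt d"])
         apply (rule runsT_PRG, simp, simp, rule runsE_Ag, simp add: z)
        apply (rule runsT_IF_tt, simp)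
        apply (rule runsT_BIND[where y=t1])
         apply (rule runsT_PRG, simp, simp, rule runsE_Ag, simp add: t1)
        apply (rule runsT_PRG, simp, simp, rule runsE_Ag, simp add: t1)
        done
    next
      case False
      then have lt: "fc k < j" using Suc by simp
      have fcs: "fc (Suc k) = Suc (fc k)" using fc_Suc F by simp
      have ih: "\<exists>y. good j y \<and> runsT g e (C LOOP2 \<bullet> C P \<bullet> C (code d (take (Suc k) os)) \<bullet> C (code dg (drop (fc (Suc k)) (take j zs)))) x y"
        apply (rule Suc(1)[of "Suc k" e])
        using Suc(2) kl lt fcs by simp_all
      obtain y where y: "good j y" "runsT g e (C LOOP2 \<bullet> C P \<bullet> C (code d (take (Suc k) os)) \<bullet> C (code dg (drop (Suc (fc k)) (take j zs)))) x y"
        using ih fcs by auto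
      have lz: "fc k < length (take j zs)" using lt j by simp
      have dr: "drop (fc k) (take j zs) = os ! k # drop (Suc (fc k)) (take j zs)"
        using Cons_nth_drop_Suc[OF lz, symmetric] zn lt by simp
      obtain z where z: "Ag (ff dg) (tt d) = Some z" "\<And>b. Ag z b = Some b" using vd_ff[OF validg] by blast
      show ?thesis
        apply (rule exI[of _ y])
        apply (rule conjI, rule y(1))
        apply (rule runsT_cong[OF ev_LOOP2])
        unfolding LOOP2B_def dr
        apply (rule runsT_LET[where a="prv (ff d) (qf k)"], simp add: q)
        apply (rule runsT_IF_ff, simp)
        apply (rule runsT_LET[where a="qf k"], simp)
        apply (rule runsT_LET[where a="v"], simp add: v)
        apply (rule runsT_IF_tt, simp add: v)
        apply (rule runsT_BIND[where y="ff dg"])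
         apply (rule runsT_PRG, simp, simp, rule runsE_Ag, simp add: isnilg1)
        apply (rule runsT_BIND[where y="z"])
         apply (rule runsT_PRG, simp, simp, rule runsE_Ag, simp add: z)
        apply (rule runsT_BIND[where y="ff d"])
         apply (rule runsT_PRG, simp, simp, rule runsE_Ag, simp add: z)
        apply (rule runsT_IF_ff, simp)
        apply (rule runsT_BIND[where y="os ! k"])
         apply (rule runsT_PRG, simp, simp, rule runsE_Ag, simp add: hdgax)
        apply (rule runsT_BIND[where y="code dg (drop (Suc (fc k)) (take j zs))"])
         apply (rule runsT_PRG, simp, simp, rule runsE_Ag, simp add: tlgax)
        apply (rule runsT_cong[OF _ y(2)])
        apply (simp add: tk)
        done
    qed
  next
    assume "\<exists>v. qf k = prv (ff d) v \<and> g v = Some (os ! k)"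
    then obtain v where v: "qf k = prv (ff d) v" "g v = Some (os ! k)" by blast
    then have F: "\<not> isF k" unfolding isF_def by simp
    have fcs: "fc (Suc k) = fc k" using fc_Suc F by simp
    have ih: "\<exists>y. good j y \<and> runsT g e (C LOOP2 \<bullet> C P \<bullet> C (code d (take (Suc k) os)) \<bullet> C (code dg (drop (fc (Suc k)) (take j zs)))) x y"
      apply (rule Suc(1)[of "Suc k" e])
      using Suc(2,4) kl fcs by simp_all
    obtain y where y: "good j y" "runsT g e (C LOOP2 \<bullet> C P \<bullet> C (code d (take (Suc k) os)) \<bullet> C (code dg (drop (fc k) (take j zs)))) x y"
      using ih fcs by auto
    show ?case
      apply (rule exI[of _ y])
      apply (rule conjI, rule y(1))
      apply (rule runsT_cong[OF ev_LOOP2])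
      unfolding LOOP2B_def
      apply (rule runsT_LET[where a="prv (ff d) (qf k)"], simp add: q)
      apply (rule runsT_IF_ff, simp)
      apply (rule runsT_LET[where a="qf k"], simp)
      apply (rule runsT_LET[where a="v"], simp add: v)
      apply (rule runsT_IF_ff, simp add: v)
      apply (rule runsT_BIND[where y="os ! k"])
       apply (rule runsT_QUERY, simp, simp add: v)
      apply (rule runsT_cong[OF _ y(2)])
      apply (simp add: tk)
      done
  qed
qed

end

context simB begin

definition R1B where
  "R1B Gv = BINDt INPUTt 1 (BINDt (PRGt (C hdg) (V 1)) 2 (BINDt (PRGt (C tlg) (V 1)) 3
     (LET 4 (C Gv \<bullet> V 0 \<bullet> V 2 \<bullet> C nilv) (C LOOP2 \<bullet> V 4 \<bullet> C nilv \<bullet> V 3))))"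
definition R1v where "R1v Gv = lv env0 0 (R1B Gv)"
definition RB where
  "RB Gv = BINDt INPUTt 1 (BINDt (PRGt (C hdg) (V 1)) 2 (BINDt (PRGt (C (pr dg)) (C (tt dg))) 3
     (PRGt (V 3) (C (R1v Gv) \<bullet> V 2))))"
definition rv where "rv Gv = the (ev env0 (RB Gv))"

lemma R1_ex: "\<exists>r1a. m (R1v Gv) a = Some r1a"
  by (simp add: R1v_def R1B_def BINDt_def BIND2_def INPUTt_def)

lemma RB_ev: "ev env0 (RB Gv) = Some (rv Gv)"
proof -
  have "\<exists>r. ev env0 (RB Gv) = Some r" by (simp add: RB_def BINDt_def BIND2_def INPUTt_def)
  then show ?thesis unfolding rv_def by auto
qed

lemma R1_runs:
  assumes r1a: "m (R1v Gv) a = Some r1a"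
    and P: "aap m (aap m (m Gv a) (Some a')) (Some nilv) = Some P"
    and L: "runsT g env0 (C LOOP2 \<bullet> C P \<bullet> C nilv \<bullet> C (code dg zs')) (code dg (a' # zs')) y"
  shows "Ag r1a (code dg (a' # zs')) = Some y"
proof -
  have "runsT g (env0(0:=a)) (R1B Gv) (code dg (a' # zs')) y"
    unfolding R1B_def
    apply (rule runsT_BIND[where y="code dg (a' # zs')"])
     apply (rule runsT_INPUT)
    apply (rule runsT_BIND[where y="a'"])
     apply (rule runsT_PRG, simp, simp, rule runsE_Ag, simp add: hdgax)
    apply (rule runsT_BIND[where y="code dg zs'"])
     apply (rule runsT_PRG, simp, simp, rule runsE_Ag, simp add: tlgax)
    apply (rule runsT_LET[where a=P], simp add: P)
    apply (rule runsT_cong[OF _ L], simp)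
    done
  then have "runsE g r1a (code dg (a' # zs')) y" using r1a unfolding runsT_def R1v_def by simp
  then show ?thesis using App_iff by blast
qed

lemma simB_main:
  assumes H: "runsT (tagO f g) env0 (C Gv \<bullet> C a \<bullet> C a' \<bullet> C nilv) K c"
  shows "aap (rel_app Ag dg f) (rel_app Ag dg f (rv Gv) a) (Some a') = Some c"
proof -
  obtain P os where P: "aap m (aap m (m Gv a) (Some a')) (Some nilv) = Some P" and r: "runs (tagO f g) P K os c"
    using H unfolding runsT_def runsE_def by auto
  define qf where "qf k = (SOME v. m P (code d (K # take k os)) = Some (prv (ff d) v) \<and> tagO f g v = Some (os ! k))" for k
  have qax: "\<forall>k<length os. m P (code d (K # take k os)) = Some (prv (ff d) (qf k)) \<and> tagO f g (qf k) = Some (os ! k)"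
  proof (intro allI impI)
    fix k assume "k < length os"
    then have "\<exists>v. m P (code d (K # take k os)) = Some (prv (ff d) v) \<and> tagO f g v = Some (os ! k)"
      using r unfolding runs_def by blast
    then show "m P (code d (K # take k os)) = Some (prv (ff d) (qf k)) \<and> tagO f g (qf k) = Some (os ! k)"
      unfolding qf_def by (rule someI_ex)
  qed
  have fin: "m P (code d (K # os)) = Some (prv (tt d) c)" using r unfolding runs_def by blast
  interpret R: simB_run m K S d cons hd tl isnil f g dg hdg tlg isnilg P os c qf
    by unfold_locales (rule fin, rule qax)
  obtain r1a where r1a: "m (R1v Gv) a = Some r1a" using R1_ex by blast
  obtain t1 where t1: "Ag (pr dg) (tt dg) = Some t1" "\<And>b. Ag t1 b = Some (gpr Ag dg (tt dg) b)"
    using vd_pr1[OF validg] by blast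
  have "runsT g env0 (RB Gv) (code dg [a]) (gpr Ag dg (tt dg) r1a)"
    unfolding RB_def
    apply (rule runsT_BIND[where y="code dg [a]"])
     apply (rule runsT_INPUT)
    apply (rule runsT_BIND[where y="a"])
     apply (rule runsT_PRG, simp, simp, rule runsE_Ag, simp add: hdgax)
    apply (rule runsT_BIND[where y="t1"])
     apply (rule runsT_PRG, simp, simp, rule runsE_Ag, simp add: t1)
    apply (rule runsT_PRG, simp, simp add: r1a, rule runsE_Ag, simp add: t1)
    done
  then have "runsE g (rv Gv) (code dg [a]) (gpr Ag dg (tt dg) r1a)"
    using RB_ev unfolding runsT_def by simp
  then have s1: "Ag (rv Gv) (code dg [a]) = aap Ag (Ag (pr dg) (tt dg)) (Some r1a)"
    using App_iff gpr_all[OF validg] by simp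
  have A1: "rel_app Ag dg f (rv Gv) a = Some r1a"
    unfolding rel_app_iff[OF validg ntg] rel_app_res_def
    by (rule exI[of _ "[]"]) (simp add: dialogue_def s1)
  have J: "\<exists>y. R.good j y \<and> Ag r1a (code dg (a' # take j R.zs)) = Some y" if j: "j \<le> length R.zs" for j
  proof -
    obtain y where y: "R.good j y" "runsT g env0 (C LOOP2 \<bullet> C P \<bullet> C (code d (take 0 os)) \<bullet> C (code dg (drop (R.fc 0) (take j R.zs)))) (code dg (a' # take j R.zs)) y"
      using R.loop2[OF j, of 0] by (auto simp: R.fc_def)
    have "Ag r1a (code dg (a' # take j R.zs)) = Some y"
      apply (rule R1_runs[OF r1a P])
      using y(2) by (simp add: R.fc_def)
    then show ?thesis using y(1) by blast
  qed
  have A2: "rel_app Ag dg f r1a a' = Some c"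
    unfolding rel_app_iff[OF validg ntg] rel_app_res_def
  proof (rule exI[of _ R.zs], rule conjI)
    show "dialogue Ag dg f r1a a' R.zs"
      unfolding dialogue_def
    proof (intro allI impI)
      fix i assume i: "i < length R.zs"
      obtain y where y: "R.good i y" "Ag r1a (code dg (a' # take i R.zs)) = Some y" using J[of i] i by auto
      then obtain v where "f v = Some (R.zs ! i)" "y = gpr Ag dg (ff dg) v" using i unfolding R.good_def by auto
      then show "\<exists>v. Ag r1a (code dg (a' # take i R.zs)) = aap Ag (Ag (pr dg) (ff dg)) (Some v) \<and> f v = Some (R.zs ! i)"
        using y(2) gpr_all[OF validg] by auto
    qed
  next
    obtain y where y: "R.good (length R.zs) y" "Ag r1a (code dg (a' # take (length R.zs) R.zs)) = Some y"
      using J[of "length R.zs"] by auto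
    then have "y = gpr Ag dg (tt dg) c" unfolding R.good_def by auto
    then show "Ag r1a (code dg (a' # R.zs)) = aap Ag (Ag (pr dg) (tt dg)) (Some c)"
      using y(2) gpr_all[OF validg] by simp
  qed
  show ?thesis using A1 A2 by simp
qed

end

context pcal begin

definition ttc where "ttc = lv env0 0 (lam 1 (V 0))"
definition ffc where "ffc = lv env0 0 (lam 1 (V 1))"
definition prc where "prc = lv env0 0 (lam 1 (lam 2 (V 2 \<bullet> V 0 \<bullet> V 1)))"
definition pv where "pv a b = lv (env0(0:=a, 1:=b)) 2 (V 2 \<bullet> V 0 \<bullet> V 1)"
definition pr0c where "pr0c = lv env0 0 (V 0 \<bullet> C ttc)"
definition pr1c where "pr1c = lv env0 0 (V 0 \<bullet> C ffc)"
fun codec :: "'a list \<Rightarrow> 'a" where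
  "codec [] = pv ttc ttc"
| "codec (a # us) = pv ffc (pv a (codec us))"
definition consc where "consc = lv env0 0 (lam 1 (C prc \<bullet> C ffc \<bullet> (C prc \<bullet> V 0 \<bullet> V 1)))"
definition hdc where "hdc = lv env0 0 (C pr0c \<bullet> (C pr1c \<bullet> V 0))"
definition tlc where "tlc = lv env0 0 (C pr1c \<bullet> (C pr1c \<bullet> V 0))"

lemma ttc_ax[simp]: "aap m (m ttc a) (Some b) = Some a" by (simp add: ttc_def)
lemma ffc_ax[simp]: "aap m (m ffc a) (Some b) = Some b" by (simp add: ffc_def)
lemma prc_ax[simp]: "aap m (m prc a) (Some b) = Some (pv a b)" by (simp add: prc_def pv_def)
lemma pr0c_ax[simp]: "m pr0c (pv a b) = Some a" by (simp add: pr0c_def pv_def)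
lemma pr1c_ax[simp]: "m pr1c (pv a b) = Some b" by (simp add: pr1c_def pv_def)
lemma pv_inj: "pv a b = pv a' b' \<Longrightarrow> a = a' \<and> b = b'"
  by (metis option.inject pr0c_ax pr1c_ax)

lemma ttc_ffc:
  assumes "(x::'a) \<noteq> y" shows "ttc \<noteq> ffc"
proof
  assume e: "ttc = ffc"
  have "aap m (m ttc x) (Some y) = Some x" by simp
  moreover have "aap m (m ffc x) (Some y) = Some y" by simp
  ultimately show False using e assms by simp
qed

lemma codec_inj:
  assumes ne: "(x::'a) \<noteq> y" shows "inj codec"
proof -
  have "codec us = codec vs \<Longrightarrow> us = vs" for us vs
  proof (induction us arbitrary: vs)
    case Nil
    then show ?case using ttc_ffc[OF ne] by (cases vs) (auto dest: pv_inj)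
  next
    case (Cons a us)
    then show ?case using ttc_ffc[OF ne] by (cases vs) (auto dest!: pv_inj)
  qed
  then show ?thesis by (rule injI)
qed

lemma valid_base:
  assumes ne: "(x::'a) \<noteq> y" shows "\<exists>dd. valid_data m dd"
proof -
  let ?dd = "\<lparr>tt = ttc, ff = ffc, pr = prc, pr0 = pr0c, pr1 = pr1c, code = codec\<rparr>"
  have 1: "\<forall>a b. aap m (m (tt ?dd) a) (Some b) = Some a" by simp
  have 2: "\<forall>a b. aap m (m (ff ?dd) a) (Some b) = Some b" by simp
  have 3: "\<forall>a b. \<exists>c. aap m (m (pr ?dd) a) (Some b) = Some c \<and> m (pr0 ?dd) c = Some a \<and> m (pr1 ?dd) c = Some b"
    by simp
  have 4: "inj (code ?dd)" using codec_inj[OF ne] by simp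
  have 5: "(\<forall>a us. aap m (m consc a) (Some (code ?dd us)) = Some (code ?dd (a # us))) \<and>
        (\<forall>a us. m hdc (code ?dd (a # us)) = Some a) \<and>
        (\<forall>a us. m tlc (code ?dd (a # us)) = Some (code ?dd us)) \<and>
        m pr0c (code ?dd []) = Some (tt ?dd) \<and>
        (\<forall>a us. m pr0c (code ?dd (a # us)) = Some (ff ?dd))"
    by (simp add: consc_def hdc_def tlc_def)
  show ?thesis unfolding valid_data_def
    apply (rule exI[of _ ?dd])
    using 1 2 3 4 5 by blast
qed

end

context pcad begin

lemma one_dir:
  "\<exists>r. \<forall>a a' c. rel_app (rel_app m d f) (pdata (rel_app m d f)) g a a' = Some c \<longrightarrow>
     aap (rel_app (rel_app m d g) (pdata (rel_app m d g)) f) (rel_app (rel_app m d g) (pdata (rel_app m d g)) f r a) (Some a') = Some c"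
proof -
  have vf: "valid_data (rel_app m d f) (pdata (rel_app m d f))"
    unfolding pdata_def using valid_ext[of f] by (rule someI_ex)
  have vg: "valid_data (rel_app m d g) (pdata (rel_app m d g))"
    unfolding pdata_def using valid_ext[of g] by (rule someI_ex)
  obtain consf where cf: "\<And>a us. aap (rel_app m d f) (rel_app m d f consf a) (Some (code (pdata (rel_app m d f)) us))
      = Some (code (pdata (rel_app m d f)) (a # us))"
    using vf unfolding valid_data_def by blast
  obtain hdg tlg isnilg where hg: "\<And>a us. rel_app m d g hdg (code (pdata (rel_app m d g)) (a # us)) = Some a"
    "\<And>a us. rel_app m d g tlg (code (pdata (rel_app m d g)) (a # us)) = Some (code (pdata (rel_app m d g)) us)"
    "rel_app m d g isnilg (code (pdata (rel_app m d g)) []) = Some (tt (pdata (rel_app m d g)))"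
    "\<And>a us. rel_app m d g isnilg (code (pdata (rel_app m d g)) (a # us)) = Some (ff (pdata (rel_app m d g)))"
    using vg unfolding valid_data_def by blast
  interpret SA: simA m K S d cons hd tl isnil f g "pdata (rel_app m d f)" consf
    by unfold_locales (rule vf, rule cf)
  interpret SB: simB m K S d cons hd tl isnil f g "pdata (rel_app m d g)" hdg tlg isnilg
    by unfold_locales (rule vg, rule hg(1), rule hg(2), rule hg(3), rule hg(4))
  show ?thesis
    apply (rule exI[of _ "SB.rv SA.LOOPA"])
    using SA.simA_main SB.simB_main by blast
qed

end

lemma pca_K: "pca m \<Longrightarrow> \<exists>K S. pcal m K S"
  unfolding pca_def pcal_def by blast

lemma iso_of_realizers:
  assumes "\<exists>r. \<forall>a a' c. m1 a a' = Some c \<longrightarrow> aap m2 (m2 r a) (Some a') = Some c"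
    and "\<exists>r. \<forall>a a' c. m2 a a' = Some c \<longrightarrow> aap m1 (m1 r a) (Some a') = Some c"
  shows "pca_iso m1 m2"
proof -
  have mc: "morph_comp (\<lambda>a. {a}) (\<lambda>a. {a}) = (\<lambda>a. {a})"
    by (rule ext) (simp add: morph_comp_def)
  have "app_morph m1 m2 (\<lambda>a. {a})" unfolding app_morph_def using assms(1) by auto
  moreover have "app_morph m2 m1 (\<lambda>a. {a})" unfolding app_morph_def using assms(2) by auto
  ultimately show ?thesis unfolding pca_iso_def using mc by blast
qed

lemma total_rel_app:
  fixes X :: "'a pas"
  assumes triv: "\<And>x y::'a. x = y" and tot: "\<And>a b. X a b \<noteq> None"
  shows "rel_app X dd Or a b \<noteq> None"
proof -
  obtain z where z: "X a (code dd [b]) = Some z" using tot by blast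
  obtain w where w: "X (pr dd) (tt dd) = Some w" using tot by blast
  obtain z' where z': "X w a = Some z'" using tot by blast
  have "rel_app_res X dd Or a b a"
    unfolding rel_app_res_def dialogue_def
    by (rule exI[of _ "[]"]) (simp add: z w z' triv[of z z'])
  then show ?thesis unfolding rel_app_def by auto
qed

theorem mainTheorem4:
  fixes m :: "'a pas" and f g :: "'a \<Rightarrow> 'a option"
  assumes "pca m"
  shows "pca_iso (extend (extend m f) g) (extend (extend m g) f)"
proof -
  obtain K S where P: "pcal m K S" using pca_K[OF assms] by blast
  interpret pcal m K S by (rule P)
  show ?thesis
  proof (cases "\<exists>x y::'a. x \<noteq> y")
    case False
    then have triv: "\<And>x y::'a. x = y" by blast
    have tm: "m a b \<noteq> None" for a b
      using Kax[of b b] triv[of a K] by (cases "m K b") auto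
    have t1: "extend m h a b \<noteq> None" for h a b
      unfolding extend_def by (rule total_rel_app[OF triv tm])
    have t2: "extend (extend m h) h' a b \<noteq> None" for h h' a b
      unfolding extend_def[of "extend m h"] by (rule total_rel_app[OF triv t1])
    have r: "\<exists>r. \<forall>a a' c. extend (extend m h) h' a a' = Some c \<longrightarrow>
       aap (extend (extend m h'') h''') (extend (extend m h'') h''' r a) (Some a') = Some c" for h h' h'' h'''
    proof (rule exI[of _ K], intro allI impI)
      fix a a' c
      obtain e where e: "extend (extend m h'') h''' K a = Some e" using t2 by blast
      obtain e' where e': "extend (extend m h'') h''' e a' = Some e'" using t2 by blast
      show "aap (extend (extend m h'') h''') (extend (extend m h'') h''' K a) (Some a') = Some c"
        using e e' triv[of e' c] by simp
    qed
    show ?thesis by (rule iso_of_realizers[OF r r])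
  next
    case True
    then obtain x y :: 'a where ne: "x \<noteq> y" by blast
    have vd: "valid_data m (pdata m)"
      unfolding pdata_def using valid_base[OF ne] by (rule someI_ex)
    obtain cons hd tl isnil where L:
      "\<And>a us. aap m (m cons a) (Some (code (pdata m) us)) = Some (code (pdata m) (a # us))"
      "\<And>a us. m hd (code (pdata m) (a # us)) = Some a"
      "\<And>a us. m tl (code (pdata m) (a # us)) = Some (code (pdata m) us)"
      "m isnil (code (pdata m) []) = Some (tt (pdata m))"
      "\<And>a us. m isnil (code (pdata m) (a # us)) = Some (ff (pdata m))"
      using vd unfolding valid_data_def by blast
    have nt: "tt (pdata m) \<noteq> ff (pdata m)" using vd_nontriv[OF vd ne] .
    interpret D: pcad m K S "pdata m" cons hd tl isnil
      by unfold_locales (rule vd, rule L(1), rule L(2), rule L(3), rule L(4), rule L(5), rule nt)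
    show ?thesis
      unfolding extend_def
      by (rule iso_of_realizers[OF D.one_dir D.one_dir])
  qed
qed

end
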